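(* Let $M\in\mathrm{GL}(2,\mathbb{Z})$ with $\det(M)=-1$. If $M$ is reversible mod $n$ for infinitely many $n\in\mathbb{N}$, then $M^2=\mathbb{1}$.
   Context: $M$ is reversible mod $n$ if there exists $R\in\mathrm{GL}(2,\mathbb{Z}/n\mathbb{Z})$ with $RMR^{-1}\equiv M^{-1}\pmod n$. *)

theory Defs
  imports "HOL-Analysis.Analysis" "HOL-Number_Theory.Cong"
begin

definition mat_cong :: "int^2^2 \<Rightarrow> int^2^2 \<Rightarrow> nat \<Rightarrow> bool" where
  "mat_cong A B n \<longleftrightarrow> (\<forall>i j. [A$i$j = B$i$j] (mod int n))"

text \<open>R is in GL(2, Z/nZ), represented by an integer lift R with an integer lift S
  of its inverse modulo n.\<close>
definition GL2_mod :: "nat \<Rightarrow> int^2^2 \<Rightarrow> int^2^2 \<Rightarrow> bool" where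
  "GL2_mod n R S \<longleftrightarrow> mat_cong (R ** S) (mat 1) n \<and> mat_cong (S ** R) (mat 1) n"

definition reversible_mod :: "int^2^2 \<Rightarrow> nat \<Rightarrow> bool" where
  "reversible_mod M n \<longleftrightarrow>
     (\<exists>R S. GL2_mod n R S \<and> mat_cong (R ** M ** S) (matrix_inv M) n)"

end

theory Submission
  imports Defs
begin

lemma matcong_iff: "mat_cong A B n \<longleftrightarrow>
   (int n dvd A$1$1 - B$1$1 \<and> int n dvd A$1$2 - B$1$2 \<and> int n dvd A$2$1 - B$2$1 \<and> int n dvd A$2$2 - B$2$2)"
  unfolding mat_cong_def by (simp add: forall_2 cong_iff_dvd_diff)

lemma inv_explicit:
  fixes M :: "int^2^2"
  assumes "invertible M" "det M = -1"
  shows "matrix_inv M = (\<chi> i j. if i = 1 then (if j = 1 then - M$2$2 else M$1$2)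
                                 else (if j = 1 then M$2$1 else - M$1$1))"
    (is "_ = ?K")
proof -
  have d: "M$1$1 * M$2$2 - M$1$2 * M$2$1 = -1" using assms(2) by (simp add: det_2)
  have MK: "M ** ?K = mat 1"
    using d by (simp add: vec_eq_iff forall_2 matrix_matrix_mult_def sum_2 mat_def algebra_simps)
  have "M ** matrix_inv M = mat 1 \<and> matrix_inv M ** M = mat 1"
    using assms(1) unfolding invertible_def matrix_inv_def by (rule someI_ex)
  then have NM: "matrix_inv M ** M = mat 1" by simp
  have "matrix_inv M = matrix_inv M ** (M ** ?K)" by (simp add: MK)
  also have "\<dots> = (matrix_inv M ** M) ** ?K" by (simp add: matrix_mul_assoc)
  also have "\<dots> = ?K" by (simp add: NM)
  finally show ?thesis .
qed

lemma rev_dvd: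
  fixes M :: "int^2^2"
  assumes "invertible M" "det M = -1" "reversible_mod M n"
  shows "int n dvd 2 * (M$1$1 + M$2$2)"
proof -
  obtain R S where G: "GL2_mod n R S" and C: "mat_cong (R ** M ** S) (matrix_inv M) n"
    using assms(3) unfolding reversible_mod_def by blast
  have SR: "mat_cong (S ** R) (mat 1) n" using G unfolding GL2_mod_def by blast
  define a where "a = M$1$1" define b where "b = M$1$2"
  define c where "c = M$2$1" define d where "d = M$2$2"
  define e11 where "e11 = (S ** R)$1$1 - 1" define e12 where "e12 = (S ** R)$1$2"
  define e21 where "e21 = (S ** R)$2$1" define e22 where "e22 = (S ** R)$2$2 - 1"
  have E: "int n dvd e11" "int n dvd e12" "int n dvd e21" "int n dvd e22"
    using SR unfolding matcong_iff e11_def e12_def e21_def e22_def by (auto simp: mat_def)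
  have T: "int n dvd a * e11 + c * e12 + b * e21 + d * e22"
    using E by (intro dvd_add dvd_mult) auto
  have id: "(R ** M ** S)$1$1 + (R ** M ** S)$2$2 - (a + d) = a * e11 + c * e12 + b * e21 + d * e22"
    unfolding a_def b_def c_def d_def e11_def e12_def e21_def e22_def
    by (simp add: matrix_matrix_mult_def sum_2 algebra_simps)
  have C2: "int n dvd (R ** M ** S)$1$1 - (- d)" "int n dvd (R ** M ** S)$2$2 - (- a)"
    using C unfolding matcong_iff inv_explicit[OF assms(1,2)] a_def d_def by auto
  have "int n dvd ((R ** M ** S)$1$1 + (R ** M ** S)$2$2 - (a + d))
          - (((R ** M ** S)$1$1 - (- d)) + ((R ** M ** S)$2$2 - (- a)))"
    using T C2 id by (metis dvd_add dvd_diff)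
  then have "int n dvd - (2 * (a + d))" by (simp add: algebra_simps)
  then have "int n dvd 2 * (a + d)" by (simp only: dvd_minus_iff)
  then show ?thesis unfolding a_def d_def .
qed

theorem corollary4p12:
  fixes M :: "int^2^2"
  assumes "invertible M"
    and "det M = -1"
    and "infinite {n::nat. reversible_mod M n}"
  shows "M ** M = mat 1"
proof -
  define t where "t = 2 * (M$1$1 + M$2$2)"
  have tz: "t = 0"
  proof (rule ccontr)
    assume "t \<noteq> 0"
    have "{n::nat. reversible_mod M n} \<subseteq> {..nat \<bar>t\<bar>}"
    proof
      fix n assume "n \<in> {n::nat. reversible_mod M n}"
      then have "int n dvd t" using rev_dvd[OF assms(1,2)] t_def by auto
      then have "int n \<le> \<bar>t\<bar>" using \<open>t \<noteq> 0\<close> using dvd_imp_le_int[of t "int n"] by simp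
      then show "n \<in> {..nat \<bar>t\<bar>}" by simp
    qed
    then show False using assms(3) finite_subset by blast
  qed
  have d: "M$1$1 * M$2$2 - M$1$2 * M$2$1 = -1" using assms(2) by (simp add: det_2)
  have tr: "M$2$2 = - M$1$1" using tz t_def by simp
  show ?thesis
    using d tr by (simp add: vec_eq_iff forall_2 matrix_matrix_mult_def sum_2 mat_def algebra_simps)
qed

end
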